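(* Let $v>3$ and let $(X,\mathcal{B})$ be an STS$(v)$ with $X=\{1,\dots,v\}$. Then there is a sequencing $\pi=[x_1\,x_2\,\cdots\,x_v]$ of $X$ that is $3$-good for $(X,\mathcal{B})$, i.e. $\{x_i,x_{i+1},x_{i+2}\}\notin\mathcal{B}$ for all $1\le i\le v-2$.
   Context: A Steiner triple system of order $v$, STS$(v)$, is a pair $(X,\mathcal{B})$ where $X$ is a set of $v$ points and $\mathcal{B}$ is a set of 3-subsets of $X$ (blocks) such that every pair of distinct points lies in exactly one block. A sequencing of $X$ is an ordering $[x_1\,x_2\,\cdots\,x_v]$ of all points of $X$, each appearing exactly once. It is $3$-good if no three consecutive points form a block. *)

theory Defs
  imports Main
begin

definition is_STS :: "'a set \<Rightarrow> 'a set set \<Rightarrow> bool" where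
  "is_STS X B \<longleftrightarrow> finite X \<and>
     (\<forall>b\<in>B. b \<subseteq> X \<and> card b = 3) \<and>
     (\<forall>x\<in>X. \<forall>y\<in>X. x \<noteq> y \<longrightarrow> (\<exists>!b. b \<in> B \<and> x \<in> b \<and> y \<in> b))"

definition is_sequencing :: "'a set \<Rightarrow> 'a list \<Rightarrow> bool" where
  "is_sequencing X xs \<longleftrightarrow> distinct xs \<and> set xs = X"

text \<open>0-indexed: xs!i, xs!(i+1), xs!(i+2) for i+2 < length xs.\<close>
definition three_good :: "'a set set \<Rightarrow> 'a list \<Rightarrow> bool" where
  "three_good B xs \<longleftrightarrow>
     (\<forall>i. i + 2 < length xs \<longrightarrow> {xs ! i, xs ! (i+1), xs ! (i+2)} \<notin> B)"

end

theory Submission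
  imports Defs
begin

lemma sts_uniq:
  assumes "is_STS X B" "S \<in> B" "T \<in> B" "p \<in> S" "q \<in> S" "p \<in> T" "q \<in> T" "p \<noteq> q"
  shows "S = T"
proof -
  have "S \<subseteq> X" using assms(1,2) unfolding is_STS_def by blast
  hence "p \<in> X" "q \<in> X" using assms by auto
  hence "\<exists>!b. b \<in> B \<and> p \<in> b \<and> q \<in> b" using assms(1,8) unfolding is_STS_def by blast
  thus ?thesis using assms by blast
qed

fun good :: "'a set set \<Rightarrow> 'a list \<Rightarrow> bool" where
  "good B (x#y#z#r) = ({x,y,z} \<notin> B \<and> good B (y#z#r))"
| "good B _ = True"

lemma three_good_Cons3:
  "three_good B (x#y#z#r) \<longleftrightarrow> {x,y,z} \<notin> B \<and> three_good B (y#z#r)"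
proof
  assume h: "three_good B (x#y#z#r)"
  have "{x,y,z} \<notin> B" using h[unfolded three_good_def, rule_format, of 0] by simp
  moreover have "three_good B (y#z#r)"
    unfolding three_good_def
  proof (intro allI impI)
    fix i assume "i + 2 < length (y#z#r)"
    thus "{(y#z#r) ! i, (y#z#r) ! (i+1), (y#z#r) ! (i+2)} \<notin> B"
      using h[unfolded three_good_def, rule_format, of "Suc i"] by simp
  qed
  ultimately show "{x,y,z} \<notin> B \<and> three_good B (y#z#r)" by blast
next
  assume h: "{x,y,z} \<notin> B \<and> three_good B (y#z#r)"
  show "three_good B (x#y#z#r)"
    unfolding three_good_def
  proof (intro allI impI)
    fix i assume i: "i + 2 < length (x#y#z#r)"
    show "{(x#y#z#r) ! i, (x#y#z#r) ! (i+1), (x#y#z#r) ! (i+2)} \<notin> B"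
    proof (cases i)
      case 0 thus ?thesis using h by simp
    next
      case (Suc j)
      have "j+2 < length (y#z#r)" using i Suc by simp
      hence "{(y#z#r)!j, (y#z#r)!(j+1), (y#z#r)!(j+2)} \<notin> B" using h unfolding three_good_def by blast
      thus ?thesis by (simp add: Suc)
    qed
  qed
qed

lemma good_eq: "good B xs = three_good B xs"
proof (induction B xs rule: good.induct)
  case (1 B x y z r) thus ?case by (simp add: three_good_Cons3)
qed (auto simp: three_good_def)

definition hb :: "'a set set \<Rightarrow> 'a list \<Rightarrow> 'a \<Rightarrow> bool" where
  "hb B ys x = (case ys of b#a#_ \<Rightarrow> {x,b,a} \<in> B | _ \<Rightarrow> False)"

lemma good_Cons: "good B (x#ys) = (\<not> hb B ys x \<and> good B ys)"
proof (cases ys)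
  case Nil thus ?thesis by (simp add: hb_def)
next
  case (Cons b r) thus ?thesis by (cases r) (auto simp: hb_def)
qed

lemma hb_uniq:
  assumes "is_STS X B" "distinct ys" "hb B ys x" "hb B ys y" "x \<notin> set ys" "y \<notin> set ys"
  shows "x = y"
proof -
  obtain b a r where ys: "ys = b#a#r" using assms(3) unfolding hb_def by (auto split: list.splits)
  have 1: "{x,b,a} \<in> B" "{y,b,a} \<in> B" using assms(3,4) ys unfolding hb_def by auto
  have "a \<noteq> b" using assms(2) ys by auto
  hence "{x,b,a} = {y,b,a}" using sts_uniq[OF assms(1) 1] by auto
  thus ?thesis using assms(5,6) ys by auto
qed

lemma card_H:
  assumes "is_STS X B" "distinct ys" "R \<inter> set ys = {}" "finite R"
  shows "card {x\<in>R. hb B ys x} \<le> 1"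
proof -
  have fH: "finite {x\<in>R. hb B ys x}" using assms(4) by simp
  have "\<forall>x\<in>{x\<in>R. hb B ys x}. \<forall>y\<in>{x\<in>R. hb B ys x}. x = y"
  proof (intro ballI)
    fix x y assume "x \<in> {x\<in>R. hb B ys x}" "y \<in> {x\<in>R. hb B ys x}"
    hence "hb B ys x" "hb B ys y" "x \<notin> set ys" "y \<notin> set ys" using assms(3) by auto
    thus "x = y" using hb_uniq[OF assms(1,2)] by blast
  qed
  hence "card {x\<in>R. hb B ys x} \<le> Suc 0" using card_le_Suc0_iff_eq[OF fH] by blast
  thus ?thesis by simp
qed

lemma ext2:
  assumes "is_STS X B" "distinct ys" "good B ys" "c \<noteq> d" "c \<notin> set ys" "d \<notin> set ys"
    "ys \<noteq> [] \<longrightarrow> {c,d,hd ys} \<notin> B"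
  shows "\<exists>zs. distinct zs \<and> set zs = {c,d} \<and> good B (zs @ ys)"
proof (cases "hb B ys d")
  case True
  have "\<not> hb B ys c" using hb_uniq[OF assms(1,2) _ True assms(5,6)] assms(4) by blast
  moreover have "\<not> hb B (c#ys) d"
  proof (cases ys)
    case Nil thus ?thesis by (simp add: hb_def)
  next
    case (Cons b r)
    have "{d,c,b} = {c,d,b}" by blast
    thus ?thesis using assms(7) Cons by (simp add: hb_def)
  qed
  ultimately have "good B ([d,c] @ ys)" using assms(3) by (simp add: good_Cons)
  moreover have "set [d,c] = {c,d}" by auto
  ultimately show ?thesis using assms(4) by (intro exI[of _ "[d,c]"]) simp
next
  case False
  moreover have "\<not> hb B (d#ys) c"
  proof (cases ys)
    case Nil thus ?thesis by (simp add: hb_def)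
  next
    case (Cons b r)
    thus ?thesis using assms(7) Cons by (simp add: hb_def)
  qed
  ultimately have "good B ([c,d] @ ys)" using assms(3) by (simp add: good_Cons)
  thus ?thesis using assms(4) by (intro exI[of _ "[c,d]"]) simp
qed

lemma ext3:
  assumes "is_STS X B" "distinct ys" "good B ys" "finite R" "card R = 3" "R \<inter> set ys = {}"
    "R \<notin> B"
  shows "\<exists>zs. distinct zs \<and> set zs = R \<and> good B (zs @ ys)"
proof -
  have "card {x\<in>R. hb B ys x} \<le> 1" using card_H assms by blast
  hence "\<not> R \<subseteq> {x\<in>R. hb B ys x}" using assms(4,5) card_mono[of "{x\<in>R. hb B ys x}" R] by auto
  then obtain x where x: "x \<in> R" "\<not> hb B ys x" by blast
  have "card (R - {x}) = 2" using assms(4,5) x by simp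
  then obtain c d where cd: "R - {x} = {c,d}" "c \<noteq> d" by (meson card_2_iff)
  have R: "R = {x,c,d}" using cd x by auto
  have "\<exists>zs. distinct zs \<and> set zs = {c,d} \<and> good B (zs @ (x#ys))"
  proof (rule ext2[OF assms(1)])
    show "distinct (x#ys)" using assms(2,6) x by auto
    show "good B (x#ys)" using assms(3) x by (simp add: good_Cons)
    show "c \<noteq> d" by fact
    show "c \<notin> set (x#ys)" "d \<notin> set (x#ys)" using cd assms(6) by auto
    have "{c,d,x} = R" using R by blast
    thus "x#ys \<noteq> [] \<longrightarrow> {c,d,hd (x#ys)} \<notin> B" using assms(7) by simp
  qed
  then obtain zs where "distinct zs" "set zs = {c,d}" "good B (zs @ (x#ys))" by blast
  thus ?thesis using cd R x assms(6) by (intro exI[of _ "zs @ [x]"]) auto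
qed

lemma ext4:
  assumes "is_STS X B" "finite R" "distinct ys" "R \<inter> set ys = {}" "good B ys" "card R \<ge> 4"
  shows "\<exists>zs. distinct zs \<and> set zs = R \<and> good B (zs @ ys)"
  using assms(2-)
proof (induction "card R" arbitrary: R ys rule: less_induct)
  case less
  have cH: "card {x\<in>R. hb B ys x} \<le> 1" using card_H[OF assms(1) less(3,4,2)] .
  show ?case
  proof (cases "card R = 4")
    case True
    let ?K = "{x\<in>R. R - {x} \<in> B}"
    have cK: "card ?K \<le> 1"
    proof -
     have "\<forall>x\<in>?K. \<forall>y\<in>?K. x = y"
     proof (intro ballI, rule ccontr)
      fix x y assume xy: "x \<in> ?K" "y \<in> ?K" "x \<noteq> y"
      have "card (R - {x,y}) = 2" using True xy less(2) by (simp add: card_Diff_subset)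
      then obtain p q where pq: "R - {x,y} = {p,q}" "p \<noteq> q" by (meson card_2_iff)
      have "R - {x} = R - {y}" by (rule sts_uniq[OF assms(1), of _ _ p q]) (use xy pq in auto)
      thus False using xy by auto
     qed
     moreover have fK: "finite ?K" using less(2) by simp
     ultimately show ?thesis using card_le_Suc0_iff_eq[OF fK] by simp
    qed
    have "card ({x\<in>R. hb B ys x} \<union> ?K) \<le> 2"
      using cH cK card_Un_le[of "{x\<in>R. hb B ys x}" ?K] by linarith
    moreover have "finite ({x\<in>R. hb B ys x} \<union> ?K)" using less(2) by simp
    ultimately have "\<not> R \<subseteq> {x\<in>R. hb B ys x} \<union> ?K"
    proof (intro notI)
      assume a: "card ({x\<in>R. hb B ys x} \<union> ?K) \<le> 2" "finite ({x\<in>R. hb B ys x} \<union> ?K)"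
        "R \<subseteq> {x\<in>R. hb B ys x} \<union> ?K"
      hence "card R \<le> card ({x\<in>R. hb B ys x} \<union> ?K)" by (intro card_mono)
      thus False using a(1) True by linarith
    qed
    then obtain x where x: "x \<in> R" "\<not> hb B ys x" "R - {x} \<notin> B" by blast
    have "\<exists>zs. distinct zs \<and> set zs = R - {x} \<and> good B (zs @ (x#ys))"
    proof (rule ext3[OF assms(1)])
      show "finite (R - {x})" using less(2) by simp
      show "distinct (x#ys)" using less(3,4) x by auto
      show "(R - {x}) \<inter> set (x#ys) = {}" using less(4) by auto
      show "good B (x#ys)" using less(5) x by (simp add: good_Cons)
      show "card (R - {x}) = 3" using less(2) True x by simp
      show "R - {x} \<notin> B" by (rule x(3))
    qed
    then obtain zs where "distinct zs" "set zs = R - {x}" "good B (zs @ (x#ys))" by blast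
    thus ?thesis using x by (intro exI[of _ "zs @ [x]"]) auto
  next
    case False
    moreover have "finite {x\<in>R. hb B ys x}" using less(2) by simp
    ultimately have "\<not> R \<subseteq> {x\<in>R. hb B ys x}"
    proof (intro notI)
      assume "finite {x\<in>R. hb B ys x}" "R \<subseteq> {x\<in>R. hb B ys x}"
      hence "card R \<le> card {x\<in>R. hb B ys x}" by (rule card_mono)
      thus False using cH less(6) by linarith
    qed
    then obtain x where x: "x \<in> R" "\<not> hb B ys x" by blast
    have "\<exists>zs. distinct zs \<and> set zs = R - {x} \<and> good B (zs @ (x#ys))"
    proof (rule less.hyps)
      show "card (R - {x}) < card R" by (rule card_Diff1_less[OF less(2) x(1)])
      show "finite (R - {x})" using less(2) by simp
      show "distinct (x#ys)" using less(3,4) x by auto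
      show "(R - {x}) \<inter> set (x#ys) = {}" using less(4) by auto
      show "good B (x#ys)" using less(5) x by (simp add: good_Cons)
      show "4 \<le> card (R - {x})" using less(2,6) False x by simp
    qed
    then obtain zs where "distinct zs" "set zs = R - {x}" "good B (zs @ (x#ys))" by blast
    thus ?thesis using x by (intro exI[of _ "zs @ [x]"]) auto
  qed
qed

theorem theorem1:
  fixes v :: nat and B :: "nat set set"
  assumes "v > 3"
    and "is_STS {1..v} B"
  shows "\<exists>xs. is_sequencing {1..v} xs \<and> three_good B xs"
proof -
  have "\<exists>zs. distinct zs \<and> set zs = {1..v} \<and> good B (zs @ [])"
    by (rule ext4[OF assms(2)]) (use assms(1) in auto)
  thus ?thesis unfolding is_sequencing_def good_eq by auto
qed

end
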